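(* Let $n\ge2$, $\boldsymbol{\lambda}=(\lambda_1,\dots,\lambda_n)$ a vector of positive integers, $\ell=\mathrm{lcm}(\lambda_1,\dots,\lambda_{n-1})$, $\boldsymbol{\lambda}'=(\lambda_1,\dots,\lambda_{n-1},\lambda_n+\ell)$, and suppose $\lambda_n\ge\ell$. Let $(a_1,\dots,a_{n-1},a_n',d)$ be a minimal generator of $M(\boldsymbol{\lambda}')$ of type (4), and set $\delta=d\ell-\frac{\ell}{\lambda_1}a_1-\cdots-\frac{\ell}{\lambda_{n-1}}a_{n-1}$. Then $(a_1,\dots,a_{n-1},a_n'-\delta,d)$ is a minimal generator of $M(\boldsymbol{\lambda})$ of type (4).
   Context: For a vector $\boldsymbol{\mu}$ of $n$ positive integers, $M(\boldsymbol{\mu})=\{(a_1,\dots,a_n,d)\in\mathbb{N}^{n+1}\mid a_1/\mu_1+\cdots+a_n/\mu_n\ge d\}$. A minimal generator of $M(\boldsymbol{\mu})$ is a nonzero element that cannot be written as the sum of two nonzero elements of $M(\boldsymbol{\mu})$. A minimal generator $(a_1,\dots,a_n,d)$ is of type (4) if $d>0$ and $a_ia_n>0$ for some $1\le i<n$. (Equivalently, $(a_1,\dots,a_{n-1},a_n'-\delta,d)=f^{-1}(a_1,\dots,a_{n-1},a_n',d)$ for the group automorphism $f(u_1,\dots,u_{n+1})=(u_1,\dots,u_{n-1},u_n+u_{n+1}\ell-\sum_{i<n}\frac{\ell}{\lambda_i}u_i,u_{n+1})$ of $\mathbb{Z}^{n+1}$.) *)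

theory Defs
  imports Complex_Main
begin

text \<open>Elements of N^(n+1) are represented as pairs (a, d) with a :: nat list of
  length n (the coordinates a_1..a_n, 0-indexed) and d :: nat.\<close>

definition M :: "nat list \<Rightarrow> (nat list \<times> nat) set" where
  "M mu = {(a, d). length a = length mu \<and>
            (\<Sum>i<length mu. real (a ! i) / real (mu ! i)) \<ge> real d}"

definition vzero :: "nat \<Rightarrow> nat list \<times> nat" where
  "vzero n = (replicate n 0, 0)"

definition vadd :: "nat list \<times> nat \<Rightarrow> nat list \<times> nat \<Rightarrow> nat list \<times> nat" where
  "vadd x y = (map2 (+) (fst x) (fst y), snd x + snd y)"

definition minimal_generator :: "nat list \<Rightarrow> nat list \<times> nat \<Rightarrow> bool" where
  "minimal_generator mu x \<longleftrightarrow>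
     x \<in> M mu \<and> x \<noteq> vzero (length mu) \<and>
     \<not> (\<exists>y\<in>M mu. \<exists>z\<in>M mu. y \<noteq> vzero (length mu) \<and> z \<noteq> vzero (length mu)
          \<and> x = vadd y z)"

definition type4 :: "nat list \<times> nat \<Rightarrow> bool" where
  "type4 x \<longleftrightarrow> (let a = fst x; n = length a in
     snd x > 0 \<and> (\<exists>i < n - 1. a ! i * a ! (n - 1) > 0))"

end

theory Submission
  imports Defs
begin

lemma vadd_iff:
  assumes "length p = n" "length q = n"
  shows "vadd (p,e1) (q,e2) = (r,e) \<longleftrightarrow> length r = n \<and> (\<forall>i<n. r!i = p!i + q!i) \<and> e = e1+e2"
  using assms unfolding vadd_def by (auto simp: list_eq_iff_nth_eq)

lemma vzero_iff:
  "(v,e) = vzero n \<longleftrightarrow> length v = n \<and> (\<forall>i<n. v!i = 0) \<and> e = 0"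
  unfolding vzero_def by (auto simp: list_eq_iff_nth_eq)

lemma key_equiv:
  fixes T c E L l :: real
  assumes "L > 0" "l > 0"
  shows "(E \<le> T + (c + l*(E - T))/(L+l)) \<longleftrightarrow> (E \<le> T + c/L)"
proof -
  have "(E \<le> T + (c + l*(E - T))/(L+l)) \<longleftrightarrow> (L+l)*(E-T) \<le> c + l*(E - T)"
    using assms by (simp add: field_simps)
  also have "\<dots> \<longleftrightarrow> L*(E-T) \<le> c" by (simp add: algebra_simps)
  also have "\<dots> \<longleftrightarrow> (E \<le> T + c/L)" using assms by (simp add: field_simps)
  finally show ?thesis .
qed

theorem proposition5p7:
  fixes lam :: "nat list" and a :: "nat list" and d :: nat
  assumes "length lam = n" and "n \<ge> 2"
    and "\<forall>i<n. lam ! i > 0"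
    and "l = Lcm (set (butlast lam))"
    and "lam' = butlast lam @ [lam ! (n - 1) + l]"
    and "lam ! (n - 1) \<ge> l"
    and "minimal_generator lam' (a, d)" and "type4 (a, d)"
    and "\<delta> = int d * int l - (\<Sum>i<n - 1. int (l div lam ! i) * int (a ! i))"
  shows "\<exists>b. int b = int (a ! (n - 1)) - \<delta> \<and>
             minimal_generator lam (butlast a @ [b], d) \<and> type4 (butlast a @ [b], d)"
proof -
  note lenlam = assms(1) and n2 = assms(2) and lampos = assms(3) and ldef = assms(4)
    and lam'def = assms(5) and Lge = assms(6) and mg = assms(7) and t4 = assms(8)
    and \<delta>def = assms(9)
  define m where "m = n - 1"
  have nm: "n = Suc m" using n2 m_def by simp
  define L where "L = lam ! m"
  have Lpos: "L > 0" using lampos nm L_def by simp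
  have lenbl: "length (butlast lam) = m" using lenlam m_def by simp
  have lpos: "l > 0"
  proof -
    have "0 \<notin> set (butlast lam)"
    proof
      assume "0 \<in> set (butlast lam)"
      then obtain i where "i < m" "butlast lam ! i = 0" using lenbl by (metis in_set_conv_nth)
      moreover have "lam ! i > 0" using lampos nm \<open>i < m\<close> by simp
      ultimately show False using nth_butlast[of i lam] lenbl by auto
    qed
    then show ?thesis using ldef Lcm_0_iff[of "set (butlast lam)"] by (metis List.finite_set gr0I)
  qed
  have ldvd: "lam ! i dvd l" if "i < m" for i
  proof -
    have "butlast lam ! i \<in> set (butlast lam)" using that lenbl by simp
    moreover have "butlast lam ! i = lam ! i" using that lenbl by (simp add: nth_butlast)
    ultimately show ?thesis using ldef by (metis dvd_Lcm)
  qed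
  have lenlam': "length lam' = n" using lam'def lenbl nm by simp
  have lam'i: "lam' ! i = lam ! i" if "i < m" for i
    using that lam'def lenbl by (simp add: nth_append nth_butlast)
  have lam'm: "lam' ! m = L + l" using lam'def lenbl L_def m_def by (simp add: nth_append)
  define t where "t b = (\<Sum>i<m. real (b!i) / real (lam!i))" for b :: "nat list"
  define D where "D b e = int e * int l - (\<Sum>i<m. int (l div lam!i) * int (b!i))"
    for b :: "nat list" and e :: nat
  have Dreal: "real_of_int (D b e) = real l * (real e - t b)" for b e
  proof -
    have "real_of_int (\<Sum>i<m. int (l div lam!i) * int (b!i)) = (\<Sum>i<m. real l * (real (b!i) / real (lam!i)))"
      unfolding of_int_sum
      by (rule sum.cong) (use ldvd in \<open>auto simp: real_of_nat_div\<close>)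
    then show ?thesis unfolding D_def t_def by (simp add: sum_distrib_left algebra_simps)
  qed
  have memM: "(v,e) \<in> M lam \<longleftrightarrow> length v = n \<and> real e \<le> t v + real (v!m) / real L" for v e
    unfolding M_def t_def L_def using lenlam nm by simp
  have memM': "(v,e) \<in> M lam' \<longleftrightarrow> length v = n \<and> real e \<le> t v + real (v!m) / real (L + l)" for v e
  proof -
    have "(\<Sum>i<n. real (v ! i) / real (lam' ! i)) = t v + real (v!m) / real (L + l)"
      unfolding t_def using nm lam'i lam'm by simp
    then show ?thesis unfolding M_def using lenlam' by simp
  qed
  have xM: "(a,d) \<in> M lam'" and xmin: "\<not> (\<exists>y\<in>M lam'. \<exists>z\<in>M lam'. y \<noteq> vzero n \<and> z \<noteq> vzero n \<and> (a,d) = vadd y z)"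
    using mg lenlam' unfolding minimal_generator_def by auto
  have lena: "length a = n" and xin: "real d \<le> t a + real (a!m) / real (L + l)"
    using xM memM' by auto
  obtain i0 where i0: "i0 < m" "a!i0 > 0" and dpos: "d > 0" and amp: "a!m > 0"
    using t4 lena nm unfolding type4_def Let_def by auto
  have \<delta>D: "\<delta> = D a d" unfolding \<delta>def D_def m_def ..
  define g where "g = real d - t a"
  have \<delta>g: "real_of_int \<delta> = real l * g" using \<delta>D Dreal g_def by simp
  define A where "A = int (a!m) - \<delta>"
  have amA: "real (a!m) = real_of_int A + real l * g" using A_def \<delta>g by simp
  have F2: "real L * g \<le> real_of_int A"
  proof -
    have "real d \<le> t a + (real_of_int A + real l * (real d - t a)) / (real L + real l)"
      using xin amA g_def by simp
    then have "real d \<le> t a + real_of_int A / real L"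
      using key_equiv[of "real L" "real l"] Lpos lpos by simp
    then have "real L * real d \<le> real_of_int A + real L * t a" using Lpos by (simp add: field_simps)
    then have "real L * (real d - t a) \<le> real_of_int A" by (simp add: right_diff_distrib)
    then show ?thesis using g_def by simp
  qed
  have F3: "real_of_int A < real L * g + 1"
  proof (rule ccontr)
    assume "\<not> ?thesis"
    then have c1: "real L * g \<le> real_of_int A - 1" by simp
    define a1 where "a1 = a[m := a!m - 1]"
    define en where "en = (replicate n (0::nat))[m := 1]"
    have len_en: "length en = n" unfolding en_def by simp
    have mn: "m < n" using nm by simp
    have en_i: "en ! i = (if i = m then 1 else 0)" if "i < n" for i
      unfolding en_def using that mn by simp
    have tpos: "t v \<ge> 0" for v unfolding t_def by (simp add: sum_nonneg)
    have "(a1, d) \<in> M lam'"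
    proof -
      have ta1: "t a1 = t a" unfolding t_def a1_def by (rule sum.cong) auto
      have "real (a1!m) = (real_of_int A - 1) + real l * (real d - t a)"
        using amA amp lena nm g_def unfolding a1_def by (simp add: of_nat_diff)
      moreover have "real d \<le> t a + (real_of_int A - 1) / real L"
        using c1 Lpos g_def by (simp add: field_simps)
      ultimately have "real d \<le> t a + real (a1!m) / (real L + real l)"
        using key_equiv[of "real L" "real l" "real d" "t a" "real_of_int A - 1"] Lpos lpos by simp
      then show ?thesis using memM' ta1 lena unfolding a1_def by simp
    qed
    moreover have "(en, 0) \<in> M lam'"
      unfolding memM' using len_en tpos[of en] by simp
    moreover have "(a1, d) \<noteq> vzero n" using dpos unfolding vzero_def by simp
    moreover have "(en, 0) \<noteq> vzero n" using mn en_i[of m] unfolding vzero_iff by auto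
    moreover have "(a,d) = vadd (a1,d) (en,0)"
    proof -
      have len_a1: "length a1 = n" unfolding a1_def using lena by simp
      have "\<forall>i<n. a!i = a1!i + en!i"
      proof (intro allI impI)
        fix i assume "i < n"
        then show "a!i = a1!i + en!i" using en_i[OF \<open>i < n\<close>] amp lena unfolding a1_def
          by (cases "i = m") auto
      qed
      then have "vadd (a1,d) (en,0) = (a,d)"
        using vadd_iff[of a1 n en d 0 a d] lena len_a1 len_en by simp
      then show ?thesis by simp
    qed
    ultimately have "\<exists>y\<in>M lam'. \<exists>z\<in>M lam'. y \<noteq> vzero n \<and> z \<noteq> vzero n \<and> (a,d) = vadd y z"
      by (intro bexI[of _ "(a1,d)"] bexI[of _ "(en,0)"]) auto
    then show False using xmin by simp
  qed
  have mn: "m < n" using nm by simp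
  have am1: "real (a!m) \<ge> 1" using amp by simp
  have gpos: "g > 0"
  proof -
    have "(real L + real l) * g > 0" using am1 amA F3 by (simp add: distrib_right)
    then show ?thesis using Lpos lpos by (simp add: zero_less_mult_iff)
  qed
  have Apos: "A > 0"
  proof -
    have "real L * g > 0" using Lpos gpos by simp
    then show ?thesis using F2 by linarith
  qed
  define b where "b = nat A"
  have bA: "int b = A" using Apos b_def by simp
  have bA': "real b = real_of_int A" using bA by (metis of_int_of_nat_eq)
  define y where "y = butlast a @ [b]"
  have lenba: "length (butlast a) = m" using lena m_def by simp
  have leny: "length y = n" using y_def lenba nm by simp
  have yi: "y!i = a!i" if "i < m" for i using that lenba unfolding y_def by (simp add: nth_append nth_butlast)
  have ym: "y!m = b" using lenba unfolding y_def by (simp add: nth_append)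
  have ty: "t y = t a" unfolding t_def by (rule sum.cong) (auto simp: yi)
  have Dy: "D y d = D a d" unfolding D_def by (simp add: yi)
  have yM: "(y,d) \<in> M lam"
  proof -
    have "g \<le> real b / real L" using F2 bA' Lpos by (simp add: field_simps)
    then show ?thesis using memM leny ty ym g_def by simp
  qed
  have ynz: "(y,d) \<noteq> vzero n" using dpos unfolding vzero_def by simp
  have yt4: "type4 (y,d)"
    unfolding type4_def Let_def using leny dpos i0 yi ym bA Apos m_def
    by (metis fst_conv mult_pos_pos of_nat_0_less_iff snd_conv)
  have tadd: "t r = t p + t q" if "\<forall>i<m. r!i = p!i + q!i" for r p q
    unfolding t_def using that by (simp add: sum.distrib[symmetric] add_divide_distrib)
  have Dadd: "D r (e1+e2) = D p e1 + D q e2" if "\<forall>i<m. r!i = p!i + q!i" for r p q e1 e2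
  proof -
    have "real_of_int (D r (e1+e2)) = real_of_int (D p e1 + D q e2)"
      unfolding of_int_add Dreal tadd[OF that] by (simp add: algebra_simps)
    then show ?thesis by (simp only: of_int_eq_iff)
  qed
  have gnn: "real e1 - t p \<ge> 0"
    if "(p,e1) \<in> M lam" "(q,e2) \<in> M lam" "\<forall>i<n. y!i = p!i + q!i" "d = e1+e2" for p q e1 e2
  proof (rule ccontr)
    assume "\<not> ?thesis"
    then have g1n: "real e1 - t p < 0" by simp
    have "real_of_int (D p e1) < 0" using Dreal g1n lpos by (simp add: mult_pos_neg)
    then have "D p e1 \<le> -1" by simp
    then have lg1: "real l * (t p - real e1) \<ge> 1" using Dreal[of p e1]
      by (simp add: algebra_simps)
    have "\<forall>i<m. y!i = p!i + q!i" using that(3) nm by simp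
    then have tyy: "t y = t p + t q" by (rule tadd)
    have gsplit: "real e2 - t q = g - (real e1 - t p)" using g_def ty tyy that(4) by simp
    have "real e2 \<le> t q + real (q!m) / real L" using that(2) memM by simp
    then have "real L * (real e2 - t q) \<le> real (q!m)" using Lpos by (simp add: field_simps)
    moreover have "real (q!m) \<le> real b" using that(3) mn ym by (metis le_add2 of_nat_mono)
    ultimately have "real L * (g - (real e1 - t p)) < real L * g + 1" using gsplit bA' F3 by simp
    then have h1: "real L * (t p - real e1) < 1" by (simp add: algebra_simps)
    have "real l * (t p - real e1) \<le> real L * (t p - real e1)"
      using Lge g1n L_def m_def by (intro mult_right_mono) auto
    then show False using h1 lg1 by simp
  qed
  have lift: "\<exists>P. length P = n \<and> (\<forall>i<m. P!i = p!i) \<and> int (P!m) = int (p!m) + D p e1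
     \<and> (P,e1) \<in> M lam' \<and> (P,e1) \<noteq> vzero n"
    if "(p,e1) \<in> M lam" "(p,e1) \<noteq> vzero n" "real e1 - t p \<ge> 0" for p e1
  proof -
    have lenp: "length p = n" using that(1) memM by simp
    have "real_of_int (D p e1) \<ge> 0" using Dreal[of p e1] that(3) by simp
    then have Dnn: "D p e1 \<ge> 0" by simp
    define P where "P = butlast p @ [nat (int (p!m) + D p e1)]"
    have lenbp: "length (butlast p) = m" using lenp m_def by simp
    have lenP: "length P = n" using P_def lenbp nm by simp
    have Pi: "P!i = p!i" if "i < m" for i using that lenbp unfolding P_def by (simp add: nth_append nth_butlast)
    have Pm: "int (P!m) = int (p!m) + D p e1" using lenbp Dnn unfolding P_def by (simp add: nth_append)
    have Pm': "real (P!m) = real (p!m) + real l * (real e1 - t p)"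
      using Pm Dreal[of p e1] by (metis of_int_add of_int_of_nat_eq)
    have tP: "t P = t p" unfolding t_def by (rule sum.cong) (auto simp: Pi)
    have "real e1 \<le> t p + real (p!m) / real L" using that(1) memM by simp
    then have "real e1 \<le> t p + real (P!m) / (real L + real l)"
      using Pm' key_equiv[of "real L" "real l" "real e1" "t p" "real (p!m)"] Lpos lpos by simp
    then have PM: "(P,e1) \<in> M lam'" using memM' lenP tP by simp
    have "(P,e1) \<noteq> vzero n"
    proof
      assume "(P,e1) = vzero n"
      then have P0: "\<forall>i<n. P!i = 0" and e0: "e1 = 0" unfolding vzero_iff by auto
      have p0: "\<forall>i<m. p!i = 0" using P0 Pi nm by auto
      have "t p = 0" unfolding t_def using p0 by simp
      then have "D p e1 = 0" using Dreal[of p e1] e0 by simp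
      then have "p!m = 0" using Pm P0 mn by simp
      then have "\<forall>i<n. p!i = 0" using p0 nm less_Suc_eq by auto
      then show False using that(2) lenp e0 unfolding vzero_iff by simp
    qed
    then show ?thesis using lenP Pi Pm PM by blast
  qed
  have ymin: "\<not> (\<exists>y1\<in>M lam. \<exists>y2\<in>M lam. y1 \<noteq> vzero n \<and> y2 \<noteq> vzero n \<and> (y,d) = vadd y1 y2)"
  proof
    assume "\<exists>y1\<in>M lam. \<exists>y2\<in>M lam. y1 \<noteq> vzero n \<and> y2 \<noteq> vzero n \<and> (y,d) = vadd y1 y2"
    then obtain p e1 q e2 where pM: "(p,e1) \<in> M lam" and qM: "(q,e2) \<in> M lam"
      and pnz: "(p,e1) \<noteq> vzero n" and qnz: "(q,e2) \<noteq> vzero n" and yv: "(y,d) = vadd (p,e1) (q,e2)"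
      by (metis surj_pair)
    have lenp: "length p = n" and lenq: "length q = n" using pM qM memM by auto
    have ysum: "\<forall>i<n. y!i = p!i + q!i" and dsum: "d = e1 + e2"
      using yv[symmetric] vadd_iff[OF lenp lenq] by auto
    have ysum': "\<forall>i<n. y!i = q!i + p!i" using ysum by (simp add: add.commute)
    have g1: "real e1 - t p \<ge> 0" using gnn[OF pM qM ysum dsum] .
    have g2: "real e2 - t q \<ge> 0" using gnn[OF qM pM ysum'] dsum by simp
    obtain P where P: "length P = n" "\<forall>i<m. P!i = p!i" "int (P!m) = int (p!m) + D p e1"
      "(P,e1) \<in> M lam'" "(P,e1) \<noteq> vzero n" using lift[OF pM pnz g1] by blast
    obtain Q where Q: "length Q = n" "\<forall>i<m. Q!i = q!i" "int (Q!m) = int (q!m) + D q e2"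
      "(Q,e2) \<in> M lam'" "(Q,e2) \<noteq> vzero n" using lift[OF qM qnz g2] by blast
    have ysm: "\<forall>i<m. y!i = p!i + q!i" using ysum nm by simp
    have "D y d = D p e1 + D q e2" using Dadd[OF ysm] dsum by simp
    then have Dsum: "\<delta> = D p e1 + D q e2" using Dy \<delta>D by simp
    have "\<forall>i<n. a!i = P!i + Q!i"
    proof (intro allI impI)
      fix i assume "i < n"
      show "a!i = P!i + Q!i"
      proof (cases "i < m")
        case True
        then show ?thesis using P(2) Q(2) ysum yi nm by simp
      next
        case False
        then have im: "i = m" using \<open>i < n\<close> nm by simp
        have "int (a!m) = int (P!m) + int (Q!m)"
          using P(3) Q(3) Dsum A_def bA ysum ym mn by simp
        then show ?thesis using im by simp
      qed
    qed
    then have "vadd (P,e1) (Q,e2) = (a,d)" using vadd_iff[OF P(1) Q(1), of e1 e2 a d] lena dsum by simp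
    then have "(a,d) = vadd (P,e1) (Q,e2)" by simp
    then show False using xmin P(4,5) Q(4,5) by blast
  qed
  have "minimal_generator lam (y,d)"
    unfolding minimal_generator_def using yM ynz ymin lenlam by simp
  then show ?thesis using bA yt4 A_def m_def y_def by blast
qed

end
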